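(* Let $M\ge1$. There exist two languages $L_1,L_2$ and an enumeration $x_{1:\infty}$ which, for each $K\in\{L_1,L_2\}$, is an $M$-bounded displacement enumeration with respect to $K$ and an enumeration of $K$ with $o(1)$-noise, such that any element-based generator that generates in the limit from the target $K$ (for either possible target $K\in\{L_1,L_2\}$) on this enumeration achieves element-based upper density at most $1/M$ (for some choice of the target).
   Context: The universe is $U=\mathbb{N}$ with its natural order; a language is an infinite subset of $U$ with canonical enumeration $\ell_1<\ell_2<\cdots$. For $A,B\subseteq\mathbb{N}$ with $B=\{b_1<b_2<\cdots\}$, $\mu_{\rm up}(A,B)=\limsup_n\frac1n|A\cap\{b_1,\dots,b_n\}|$. For $x\in U$, $\sigma(x,L)=j$ if $x=\ell_j$ and $0$ if $x\notin L$; $x_{1:\infty}$ is an $M$-bounded displacement enumeration with respect to $L$ if there is $n^\star$ with $\sigma(x_n,L)\le Mn$ for all $n\ge n^\star$. An enumeration of $L$ with $o(1)$-noise is a sequence of distinct elements listing every element of $L$ with $\frac1n|\{t\le n:x_t\notin L\}|\to0$. An element-based generator outputs, from $x_1,\dots,x_n$ and knowledge of $\{L_1,L_2\}$ (not $K$), an element $w_n\notin\{x_1,\dots,x_n,w_1,\dots,w_{n-1}\}$; it generates in the limit from $K$ if $w_n\in K$ for all large $n$; its element-based upper density is $\mu_{\rm up}(\{w_1,w_2,\dots\},K)$. *)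

theory Defs
  imports Complex_Main "HOL-Library.Extended_Real" "HOL-Library.Infinite_Set"
begin

text \<open>Sequences are 1-indexed: an enumeration is x :: nat => nat, and only x 1, x 2, ... matter.\<close>

definition language :: "nat set \<Rightarrow> bool" where
  "language L \<longleftrightarrow> infinite L"

text \<open>sigma(y,L): index j with y = l_j in the canonical (increasing) enumeration of L, 0 if y not in L.\<close>
definition sigma :: "nat \<Rightarrow> nat set \<Rightarrow> nat" where
  "sigma y L = (if y \<in> L then card {z \<in> L. z \<le> y} else 0)"

text \<open>mu_up(A,B) = limsup_n (1/n) |A inter {b_1,...,b_n}|; b_{i+1} = enumerate B i.\<close>
definition mu_up :: "nat set \<Rightarrow> nat set \<Rightarrow> ereal" where
  "mu_up A B = limsup (\<lambda>n. ereal (real (card (A \<inter> enumerate B ` {..<n})) / real n))"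

definition bounded_displacement :: "nat \<Rightarrow> (nat \<Rightarrow> nat) \<Rightarrow> nat set \<Rightarrow> bool" where
  "bounded_displacement M x L \<longleftrightarrow> (\<exists>n0. \<forall>n\<ge>n0. n \<ge> 1 \<longrightarrow> sigma (x n) L \<le> M * n)"

definition noisy_enumeration :: "(nat \<Rightarrow> nat) \<Rightarrow> nat set \<Rightarrow> bool" where
  "noisy_enumeration x L \<longleftrightarrow>
     inj_on x {1..} \<and> L \<subseteq> x ` {1..} \<and>
     (\<lambda>n. real (card {t \<in> {1..n}. x t \<notin> L}) / real n) \<longlonglongrightarrow> 0"

definition gen_output :: "(nat list \<Rightarrow> nat) \<Rightarrow> (nat \<Rightarrow> nat) \<Rightarrow> nat \<Rightarrow> nat" where
  "gen_output G x n = G (map x [1..<Suc n])"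

definition valid_generator :: "(nat list \<Rightarrow> nat) \<Rightarrow> (nat \<Rightarrow> nat) \<Rightarrow> bool" where
  "valid_generator G x \<longleftrightarrow>
     (\<forall>n\<ge>1. gen_output G x n \<notin> x ` {1..n} \<union> gen_output G x ` {1..<n})"

definition generates_in_limit :: "(nat list \<Rightarrow> nat) \<Rightarrow> (nat \<Rightarrow> nat) \<Rightarrow> nat set \<Rightarrow> bool" where
  "generates_in_limit G x K \<longleftrightarrow> (\<exists>N. \<forall>n\<ge>N. gen_output G x n \<in> K)"

definition element_upper_density :: "(nat list \<Rightarrow> nat) \<Rightarrow> (nat \<Rightarrow> nat) \<Rightarrow> nat set \<Rightarrow> ereal" where
  "element_upper_density G x K = mu_up (gen_output G x ` {1..}) K"

end

theory Submission
  imports Defs "HOL-Real_Asymp.Real_Asymp"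
begin

lemma enum_UNIV_nat: "enumerate (UNIV::nat set) n = n"
proof (induct n)
  case 0
  then show ?case by (simp add: enumerate_0)
next
  case (Suc n)
  have "enumerate (UNIV::nat set) (Suc n) = (LEAST s. s \<in> UNIV \<and> enumerate UNIV n < s)"
    by (rule enumerate_Suc'') simp
  also have "\<dots> = Suc n" using Suc by (intro Least_equality) auto
  finally show ?case .
qed

lemma sigma_le: "sigma y L \<le> y + 1"
proof -
  have "card {z \<in> L. z \<le> y} \<le> card {..y}"
    by (intro card_mono) auto
  then show ?thesis by (simp add: sigma_def)
qed

lemma density_bound:
  assumes M: "M \<ge> 1" and gen: "generates_in_limit G x {y. M dvd y}"
  shows "element_upper_density G x UNIV \<le> ereal (1 / real M)"
proof -
  obtain N where N: "\<forall>n\<ge>N. gen_output G x n \<in> {y. M dvd y}"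
    using gen unfolding generates_in_limit_def by blast
  define W where "W = gen_output G x ` {1..}"
  have bnd: "real (card (W \<inter> {..<n})) / real n \<le> real (N+1) / real n + 1 / real M"
    if n: "n > 0" for n
  proof -
    have sub: "W \<inter> {..<n} \<subseteq> gen_output G x ` {..<N} \<union> (\<lambda>k. M*k) ` {..<n div M + 1}"
    proof
      fix w assume w: "w \<in> W \<inter> {..<n}"
      then obtain i where i: "i \<ge> 1" "w = gen_output G x i" unfolding W_def by auto
      show "w \<in> gen_output G x ` {..<N} \<union> (\<lambda>k. M*k) ` {..<n div M + 1}"
      proof (cases "i < N")
        case True then show ?thesis using i by auto
      next
        case False
        then have "M dvd w" using N i by auto
        then obtain k where k: "w = M*k" by auto
        have "M*k \<le> n" using w k by auto
        then have "M*k div M \<le> n div M" by (rule div_le_mono)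
        then have "k \<le> n div M" using M by simp
        then show ?thesis using k by auto
      qed
    qed
    have "card (W \<inter> {..<n}) \<le> card (gen_output G x ` {..<N} \<union> (\<lambda>k. M*k) ` {..<n div M + 1})"
      by (intro card_mono sub) auto
    also have "\<dots> \<le> card (gen_output G x ` {..<N}) + card ((\<lambda>k. M*k) ` {..<n div M + 1})"
      by (rule card_Un_le)
    also have "\<dots> \<le> N + (n div M + 1)"
      by (intro add_mono card_image_le[THEN order.trans]) auto
    finally have c: "real (card (W \<inter> {..<n})) \<le> real N + real (n div M) + 1" by linarith
    have "real (n div M) \<le> real n / real M" by (rule of_nat_div_le_of_nat)
    then have "real (card (W \<inter> {..<n})) \<le> real (N+1) + real n / real M" using c by simp
    then have "real (card (W \<inter> {..<n})) / real n \<le> (real (N+1) + real n / real M) / real n"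
      using n by (simp add: divide_right_mono)
    also have "\<dots> = real (N+1) / real n + 1 / real M" using n by (simp add: field_simps)
    finally show ?thesis .
  qed
  have ev: "eventually (\<lambda>n. ereal (real (card (W \<inter> enumerate UNIV ` {..<n})) / real n)
      \<le> ereal (real (N+1) / real n + 1 / real M)) sequentially"
  proof -
    have img: "enumerate (UNIV::nat set) ` {..<n} = {..<n}" for n
      by (simp add: enum_UNIV_nat)
    show ?thesis using eventually_gt_at_top[of 0]
      by eventually_elim (simp only: img ereal_less_eq bnd)
  qed
  have lim: "(\<lambda>n. real (N+1) / real n + 1 / real M) \<longlonglongrightarrow> 1 / real M"
    by real_asymp
  have "element_upper_density G x UNIV
      \<le> limsup (\<lambda>n. ereal (real (N+1) / real n + 1 / real M))"
    unfolding element_upper_density_def mu_up_def W_def[symmetric]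
    by (rule Limsup_mono[OF ev])
  also have "\<dots> = ereal (1 / real M)"
    by (rule lim_imp_Limsup[OF trivial_limit_sequentially]) (rule tendsto_ereal[OF lim])
  finally show ?thesis .
qed


definition dd :: "nat \<Rightarrow> nat \<Rightarrow> nat" where
  "dd M j = M * (j div (M - 1)) + j mod (M - 1) + 1"

definition SQ :: "nat set" where "SQ = range (\<lambda>j. (Suc j)^2)"
definition TT :: "nat set" where "TT = {1..} - SQ"

definition xx :: "nat \<Rightarrow> nat \<Rightarrow> nat" where
  "xx M t = (if t \<in> SQ then dd M (THE j. t = (Suc j)^2) else M * (THE k. enumerate TT k = t))"

lemma sq_inj: "(Suc a)^2 = (Suc b)^2 \<Longrightarrow> a = b"
  by (metis Suc_inject power_eq_iff_eq_base zero_le zero_less_numeral)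

lemma sq_plus1_not_sq: "(Suc m)^2 + 1 \<noteq> (Suc j)^2"
proof
  assume h: "(Suc m)^2 + 1 = (Suc j)^2"
  show False
  proof (cases "j \<le> m")
    case True
    then have le: "(Suc j)^2 \<le> (Suc m)^2" by (intro power_mono) auto
    show False using h le by linarith
  next
    case False
    then have "Suc (Suc m) \<le> Suc j" by simp
    then have "(Suc (Suc m))^2 \<le> (Suc j)^2" by (intro power_mono) auto
    then show False using h by (simp add: power2_eq_square)
  qed
qed

lemma TT_inf: "infinite TT"
proof -
  have "range (\<lambda>m. (Suc m)^2 + 1) \<subseteq> TT"
    unfolding TT_def SQ_def using sq_plus1_not_sq by auto
  moreover have "inj (\<lambda>m::nat. (Suc m)^2 + 1)"
    by (auto intro!: injI dest: sq_inj)
  ultimately show ?thesis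
    by (meson finite_subset infinite_iff_countable_subset)
qed

lemma xx_sq: "xx M ((Suc j)^2) = dd M j"
proof -
  have "(THE i. (Suc j)^2 = (Suc i)^2) = j"
    by (rule the_equality) (auto dest: sq_inj)
  then show ?thesis unfolding xx_def SQ_def by auto
qed

lemma enum_TT_not_SQ: "enumerate TT k \<notin> SQ" and enum_TT_ge1: "enumerate TT k \<ge> 1"
  using enumerate_in_set[OF TT_inf, of k] unfolding TT_def by auto

lemma xx_TT: "xx M (enumerate TT k) = M * k"
proof -
  have "(THE i. enumerate TT i = enumerate TT k) = k"
    by (rule the_equality) (auto dest: inj_enumerate[OF TT_inf, THEN injD])
  then show ?thesis unfolding xx_def using enum_TT_not_SQ by auto
qed

lemma TT_cases: "t \<ge> 1 \<Longrightarrow> (\<exists>j. t = (Suc j)^2) \<or> (\<exists>k. t = enumerate TT k)"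
proof -
  assume "t \<ge> 1"
  show ?thesis
  proof (cases "t \<in> SQ")
    case True then show ?thesis unfolding SQ_def by auto
  next
    case False
    then have "t \<in> TT" using \<open>t \<ge> 1\<close> unfolding TT_def by auto
    then show ?thesis using enumerate_Ex[OF TT_inf] by metis
  qed
qed

lemma enum_TT_ge: "Suc k \<le> enumerate TT k"
proof (induct k)
  case 0 then show ?case using enum_TT_ge1 by simp
next
  case (Suc k)
  have "enumerate TT k < enumerate TT (Suc k)" by (rule enumerate_step[OF TT_inf])
  then show ?case using Suc by simp
qed

lemma sq_ne_TT: "(Suc j)^2 \<noteq> enumerate TT k"
  using enum_TT_not_SQ[of k] unfolding SQ_def by (metis rangeI)

lemma dd_mod: assumes "M \<ge> 2" shows "dd M j mod M = j mod (M - 1) + 1"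
proof -
  have "j mod (M - 1) < M - 1" using assms by (intro mod_less_divisor) simp
  then have "j mod (M - 1) + 1 < M" by linarith
  then show ?thesis unfolding dd_def by simp
qed

lemma dd_div: assumes "M \<ge> 2" shows "dd M j div M = j div (M - 1)"
proof -
  have "j mod (M - 1) < M - 1" using assms by (intro mod_less_divisor) simp
  then have "j mod (M - 1) + 1 < M" by linarith
  then have z: "(j mod (M - 1) + 1) div M = 0" by (rule div_less)
  have "dd M j = (j mod (M-1) + 1) + M * (j div (M-1))" by (simp add: dd_def)
  also have "\<dots> div M = j div (M-1) + (j mod (M-1) + 1) div M"
    by (rule div_mult_self2) (use assms in simp)
  finally show ?thesis using z by linarith
qed

lemma dd_not_dvd: "M \<ge> 2 \<Longrightarrow> \<not> M dvd dd M j"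
  using dd_mod[of M j] by (simp add: dvd_eq_mod_eq_0)

lemma dd_inj: assumes "M \<ge> 2" "dd M a = dd M b" shows "a = b"
proof -
  have "a div (M-1) = b div (M-1)" "a mod (M-1) = b mod (M-1)"
    using dd_div[OF assms(1), of a] dd_div[OF assms(1), of b]
      dd_mod[OF assms(1), of a] dd_mod[OF assms(1), of b] assms(2) by simp_all
  then show ?thesis by (metis div_mult_mod_eq)
qed

lemma dd_surj: assumes "M \<ge> 2" "\<not> M dvd y" shows "dd M ((y div M) * (M - 1) + (y mod M - 1)) = y"
proof -
  have r: "y mod M \<ge> 1" using assms by (simp add: dvd_eq_mod_eq_0)
  have "y mod M < M" using assms by simp
  then have r2: "y mod M - 1 < M - 1" using r by linarith
  have "((y div M) * (M - 1) + (y mod M - 1)) div (M - 1) = y div M"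
    using r2 by simp
  moreover have "((y div M) * (M - 1) + (y mod M - 1)) mod (M - 1) = y mod M - 1"
    using r2 by simp
  ultimately have "dd M ((y div M) * (M - 1) + (y mod M - 1)) = M * (y div M) + (y mod M - 1) + 1"
    unfolding dd_def by simp
  also have "\<dots> = M * (y div M) + y mod M" using r by linarith
  also have "\<dots> = y" by simp
  finally show ?thesis .
qed


lemma xx_bound: assumes "M \<ge> 2" "t \<ge> 1" shows "xx M t + 1 \<le> M * t"
proof -
  from TT_cases[OF assms(2)] show ?thesis
  proof
    assume "\<exists>j. t = (Suc j)^2"
    then obtain j where t: "t = (Suc j)^2" by auto
    have a: "j div (M - 1) \<le> j" by (rule div_le_dividend)
    have "j mod (M - 1) < M - 1" using assms by (intro mod_less_divisor) simp
    then have b: "j mod (M - 1) + 1 \<le> M - 1" by linarith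
    have "M * (j div (M - 1)) \<le> M * j" using a by simp
    then have "dd M j + 1 \<le> M * j + M" using b assms unfolding dd_def by linarith
    also have "\<dots> = M * Suc j" by simp
    also have "\<dots> \<le> M * (Suc j)^2" by (simp add: power2_eq_square)
    finally show ?thesis using t xx_sq by simp
  next
    assume "\<exists>k. t = enumerate TT k"
    then obtain k where t: "t = enumerate TT k" by auto
    have "M * Suc k \<le> M * t" using enum_TT_ge[of k] t by (intro mult_le_mono2) simp
    then show ?thesis using t xx_TT[of M k] assms by simp
  qed
qed

lemma xx_inj: assumes "M \<ge> 2" shows "inj_on (xx M) {1..}"
proof (rule inj_onI)
  fix a b assume a: "a \<in> {1..}" and b: "b \<in> {1..}" and e: "xx M a = xx M b"
  from TT_cases[of a] TT_cases[of b] a b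
  consider (ss) i j where "a = (Suc i)^2" "b = (Suc j)^2"
    | (st) i k where "a = (Suc i)^2" "b = enumerate TT k"
    | (ts) k i where "a = enumerate TT k" "b = (Suc i)^2"
    | (tt) k l where "a = enumerate TT k" "b = enumerate TT l"
    by auto
  then show "a = b"
  proof cases
    case ss then show ?thesis using e xx_sq dd_inj[OF assms] by metis
  next
    case st then show ?thesis using e xx_sq xx_TT dd_not_dvd[OF assms] by (metis dvd_triv_left)
  next
    case ts then show ?thesis using e xx_sq xx_TT dd_not_dvd[OF assms] by (metis dvd_triv_left)
  next
    case tt
    then have "M * k = M * l" using e xx_TT by metis
    then have "k = l" using assms by simp
    then show ?thesis using tt by simp
  qed
qed

lemma xx_surj: assumes "M \<ge> 2" shows "UNIV \<subseteq> xx M ` {1..}"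
proof
  fix y :: nat
  show "y \<in> xx M ` {1..}"
  proof (cases "M dvd y")
    case True
    then obtain k where y: "y = M * k" by auto
    then show ?thesis using xx_TT[of M k] enum_TT_ge1[of k]
      by (metis atLeast_iff image_eqI)
  next
    case False
    let ?j = "(y div M) * (M - 1) + (y mod M - 1)"
    have "xx M ((Suc ?j)^2) = y" using xx_sq dd_surj[OF assms False] by simp
    moreover have "(Suc ?j)^2 \<in> {1..}" by simp
    ultimately show ?thesis by (metis image_eqI)
  qed
qed

lemma noise_card: assumes "M \<ge> 2"
  shows "real (card {t \<in> {1..n}. xx M t \<notin> {y. M dvd y}}) \<le> sqrt (real n)"
proof -
  have sub: "{t \<in> {1..n}. xx M t \<notin> {y. M dvd y}} \<subseteq> (\<lambda>j. (Suc j)^2) ` {..<nat \<lfloor>sqrt (real n)\<rfloor>}"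
  proof
    fix t assume t: "t \<in> {t \<in> {1..n}. xx M t \<notin> {y. M dvd y}}"
    then have t1: "t \<ge> 1" "t \<le> n" by auto
    from TT_cases[OF t1(1)] show "t \<in> (\<lambda>j. (Suc j)^2) ` {..<nat \<lfloor>sqrt (real n)\<rfloor>}"
    proof
      assume "\<exists>k. t = enumerate TT k"
      then obtain k where "t = enumerate TT k" by auto
      then have "xx M t = M * k" using xx_TT by simp
      then show ?thesis using t by auto
    next
      assume "\<exists>j. t = (Suc j)^2"
      then obtain j where tj: "t = (Suc j)^2" by auto
      have "real ((Suc j)^2) \<le> real n" using t1 tj by (simp only: of_nat_le_iff)
      then have "sqrt (real ((Suc j)^2)) \<le> sqrt (real n)" by (rule real_sqrt_le_mono)
      then have "real (Suc j) \<le> sqrt (real n)" by simp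
      then have "int (Suc j) \<le> \<lfloor>sqrt (real n)\<rfloor>" by (simp add: le_floor_iff)
      then have "j < nat \<lfloor>sqrt (real n)\<rfloor>" by linarith
      then show ?thesis using tj by auto
    qed
  qed
  have "card {t \<in> {1..n}. xx M t \<notin> {y. M dvd y}} \<le> card ((\<lambda>j. (Suc j)^2) ` {..<nat \<lfloor>sqrt (real n)\<rfloor>})"
    by (intro card_mono sub) auto
  also have "\<dots> \<le> nat \<lfloor>sqrt (real n)\<rfloor>" using card_image_le[of "{..<nat \<lfloor>sqrt (real n)\<rfloor>}"] by simp
  finally have "real (card {t \<in> {1..n}. xx M t \<notin> {y. M dvd y}}) \<le> real (nat \<lfloor>sqrt (real n)\<rfloor>)"
    by linarith
  also have "\<dots> = of_int \<lfloor>sqrt (real n)\<rfloor>" by (simp add: of_nat_nat)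
  also have "\<dots> \<le> sqrt (real n)" by (rule of_int_floor_le)
  finally show ?thesis .
qed

lemma noise_lim: assumes "M \<ge> 2"
  shows "(\<lambda>n. real (card {t \<in> {1..n}. xx M t \<notin> {y. M dvd y}}) / real n) \<longlonglongrightarrow> 0"
proof (rule tendsto_sandwich[of "\<lambda>n. 0" _ _ "\<lambda>n. sqrt (real n) / real n"])
  show "\<forall>\<^sub>F n in sequentially. 0 \<le> real (card {t \<in> {1..n}. xx M t \<notin> {y. M dvd y}}) / real n"
    by simp
  show "\<forall>\<^sub>F n in sequentially. real (card {t \<in> {1..n}. xx M t \<notin> {y. M dvd y}}) / real n
      \<le> sqrt (real n) / real n"
    using noise_card[OF assms] by (intro always_eventually allI divide_right_mono) auto
  show "(\<lambda>n. 0::real) \<longlonglongrightarrow> 0" by simp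
  show "(\<lambda>n. sqrt (real n) / real n) \<longlonglongrightarrow> 0" by real_asymp
qed


lemma mult_set_inf: assumes "M \<ge> 1" shows "infinite {y::nat. M dvd y}"
proof -
  have "range (\<lambda>k::nat. M * k) \<subseteq> {y. M dvd y}" by auto
  moreover have "inj (\<lambda>k::nat. M * k)" using assms by (auto intro!: injI)
  ultimately show ?thesis by (meson finite_subset infinite_iff_countable_subset)
qed

lemma case_M2: assumes "M \<ge> 2"
  shows "\<exists>L1 L2 (x :: nat \<Rightarrow> nat).
           language L1 \<and> language L2 \<and>
           (\<forall>K\<in>{L1, L2}. bounded_displacement M x K \<and> noisy_enumeration x K) \<and>
           (\<forall>G. valid_generator G x \<and> generates_in_limit G x L1 \<and> generates_in_limit G x L2
                \<longrightarrow> (\<exists>K\<in>{L1, L2}. element_upper_density G x K \<le> ereal (1 / real M)))"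
proof (intro exI conjI ballI allI impI)
  show "language (UNIV :: nat set)" by (simp add: language_def)
  show "language {y::nat. M dvd y}" using mult_set_inf assms by (simp add: language_def)
  fix K assume K: "K \<in> {UNIV, {y. M dvd y}}"
  show "bounded_displacement M (xx M) K"
    unfolding bounded_displacement_def
  proof (intro exI allI impI)
    fix n :: nat assume "n \<ge> 1"
    then show "sigma (xx M n) K \<le> M * n"
      using sigma_le[of "xx M n" K] xx_bound[OF assms, of n] by linarith
  qed
  have nU: "(\<lambda>n. real (card {t \<in> {1..n}. xx M t \<notin> (UNIV::nat set)}) / real n) \<longlonglongrightarrow> 0"
    by simp
  show "noisy_enumeration (xx M) K"
    unfolding noisy_enumeration_def
    using K xx_inj[OF assms] xx_surj[OF assms] noise_lim[OF assms] nU by auto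
next
  fix G assume "valid_generator G (xx M) \<and> generates_in_limit G (xx M) UNIV
     \<and> generates_in_limit G (xx M) {y. M dvd y}"
  then have "element_upper_density G (xx M) UNIV \<le> ereal (1 / real M)"
    using density_bound[of M] assms by auto
  then show "\<exists>K\<in>{UNIV, {y. M dvd y}}. element_upper_density G (xx M) K \<le> ereal (1 / real M)"
    by auto
qed

lemma case_M1:
  shows "\<exists>L1 L2 (x :: nat \<Rightarrow> nat).
           language L1 \<and> language L2 \<and>
           (\<forall>K\<in>{L1, L2}. bounded_displacement 1 x K \<and> noisy_enumeration x K) \<and>
           (\<forall>G. valid_generator G x \<and> generates_in_limit G x L1 \<and> generates_in_limit G x L2
                \<longrightarrow> (\<exists>K\<in>{L1, L2}. element_upper_density G x K \<le> ereal (1 / real (1::nat))))"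
proof (intro exI[of _ UNIV] exI[of _ "\<lambda>t. t - 1"] conjI ballI allI impI)
  show "language (UNIV :: nat set)" by (simp add: language_def)
  show "language (UNIV :: nat set)" by (simp add: language_def)
  fix K assume K: "K \<in> {UNIV, UNIV :: nat set}"
  show "bounded_displacement 1 (\<lambda>t. t - 1) K"
    unfolding bounded_displacement_def
  proof (intro exI allI impI)
    fix n :: nat assume "n \<ge> 1"
    then show "sigma (n - 1) K \<le> 1 * n"
      using sigma_le[of "n - 1" K] by linarith
  qed
  have inj: "inj_on (\<lambda>t::nat. t - 1) {1..}" by (auto intro!: inj_onI)
  have sur: "UNIV \<subseteq> (\<lambda>t::nat. t - 1) ` {1..}"
  proof
    fix y :: nat show "y \<in> (\<lambda>t. t - 1) ` {1..}" by (rule image_eqI[of _ _ "y + 1"]) auto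
  qed
  show "noisy_enumeration (\<lambda>t. t - 1) K"
    unfolding noisy_enumeration_def using K inj sur by auto
next
  fix G assume "valid_generator G (\<lambda>t. t - 1) \<and> generates_in_limit G (\<lambda>t. t - 1) UNIV
     \<and> generates_in_limit G (\<lambda>t. t - 1) UNIV"
  then have "generates_in_limit G (\<lambda>t. t - 1) {y. (1::nat) dvd y}" by simp
  then have "element_upper_density G (\<lambda>t. t - 1) UNIV \<le> ereal (1 / real (1::nat))"
    using density_bound[of 1] by auto
  then show "\<exists>K\<in>{UNIV, UNIV}. element_upper_density G (\<lambda>t. t - 1) K \<le> ereal (1 / real (1::nat))"
    by auto
qed

theorem theorem7p12:
  fixes M :: nat
  assumes "M \<ge> 1"
  shows "\<exists>L1 L2 (x :: nat \<Rightarrow> nat).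
           language L1 \<and> language L2 \<and>
           (\<forall>K\<in>{L1, L2}. bounded_displacement M x K \<and> noisy_enumeration x K) \<and>
           (\<forall>G. valid_generator G x \<and> generates_in_limit G x L1 \<and> generates_in_limit G x L2
                \<longrightarrow> (\<exists>K\<in>{L1, L2}. element_upper_density G x K \<le> ereal (1 / real M)))"
proof (cases "M = 1")
  case True
  then show ?thesis using case_M1 by simp
next
  case False
  then have "M \<ge> 2" using assms by simp
  then show ?thesis by (rule case_M2)
qed

end
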